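(* Let $\mathcal N$ be a class of phylogenetic networks on a set $S$ of taxa such that for all $N_1,N_2\in\mathcal N$, $d_\mu(N_1,N_2)=0$ implies $N_1\cong N_2$. Then for all $N_1,N_2\in\mathcal N$, $m(N_1,N_2)=0$ implies $N_1\cong N_2$.
   Context: A phylogenetic network on $S=\{1,\dots,n\}$ is a finite rooted directed acyclic graph whose leaves are bijectively labeled by $S$; $\cong$ is digraph isomorphism preserving leaf labels. For a node $v$, $\mu(v)=(m_1(v),\dots,m_n(v))$ where $m_i(v)$ is the number of directed paths from $v$ to leaf $i$; $\mu(N)$ is the multiset of $\mu(v)$ over all nodes, and $d_\mu(N_1,N_2)=\frac12|\mu(N_1)\bigtriangleup\mu(N_2)|$. The nested label $\ell(v)$ is defined by induction on height: $\ell(v)=\{i\}$ for the leaf labeled $i$, otherwise the multiset of nested labels of the children of $v$; $\Upsilon(N)$ is the multiset of nested labels of all nodes, and $m(N_1,N_2)=\frac12|\Upsilon(N_1)\bigtriangleup\Upsilon(N_2)|$. Here $\bigtriangleup$ is multiset symmetric difference (multiplicity $|M_1(x)-M_2(x)|$) and $|\cdot|$ is the sum of multiplicities. *)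

theory Defs
  imports Complex_Main "HOL-Library.Multiset"
begin

text \<open>A (candidate) network on the taxa S = {1..n}: a node set, a set of arcs,
  and the leaf labelling (taxon i is attached to node leaf i).\<close>
record 'v network =
  nodes :: "'v set"
  arcs  :: "('v \<times> 'v) set"
  leaf  :: "nat \<Rightarrow> 'v"

definition children :: "'v network \<Rightarrow> 'v \<Rightarrow> 'v set" where
  "children N v = {w. (v, w) \<in> arcs N}"

definition is_leaf_node :: "'v network \<Rightarrow> 'v \<Rightarrow> bool" where
  "is_leaf_node N v \<longleftrightarrow> v \<in> nodes N \<and> children N v = {}"

definition phylo_net :: "nat \<Rightarrow> 'v network \<Rightarrow> bool" where
  "phylo_net n N \<longleftrightarrow>
     finite (nodes N) \<and>
     arcs N \<subseteq> nodes N \<times> nodes N \<and>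
     acyclic (arcs N) \<and>
     (\<exists>r\<in>nodes N. \<forall>v\<in>nodes N. (r, v) \<in> (arcs N)\<^sup>*) \<and>
     bij_betw (leaf N) {1..n} {v. is_leaf_node N v}"

definition net_iso :: "nat \<Rightarrow> 'v network \<Rightarrow> 'w network \<Rightarrow> bool" where
  "net_iso n N1 N2 \<longleftrightarrow>
     (\<exists>f. bij_betw f (nodes N1) (nodes N2) \<and>
          (\<forall>u\<in>nodes N1. \<forall>v\<in>nodes N1. (u, v) \<in> arcs N1 \<longleftrightarrow> (f u, f v) \<in> arcs N2) \<and>
          (\<forall>i\<in>{1..n}. f (leaf N1 i) = leaf N2 i))"

definition is_dpath :: "'v network \<Rightarrow> 'v list \<Rightarrow> bool" where
  "is_dpath N p \<longleftrightarrow> p \<noteq> [] \<and> (\<forall>k. Suc k < length p \<longrightarrow> (p ! k, p ! Suc k) \<in> arcs N)"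

definition num_paths :: "'v network \<Rightarrow> 'v \<Rightarrow> 'v \<Rightarrow> nat" where
  "num_paths N v w = card {p. is_dpath N p \<and> hd p = v \<and> last p = w}"

definition mu_vec :: "nat \<Rightarrow> 'v network \<Rightarrow> 'v \<Rightarrow> nat list" where
  "mu_vec n N v = map (\<lambda>i. num_paths N v (leaf N i)) [1..<Suc n]"

definition mu_rep :: "nat \<Rightarrow> 'v network \<Rightarrow> nat list multiset" where
  "mu_rep n N = image_mset (mu_vec n N) (mset_set (nodes N))"

definition msym_diff :: "'a multiset \<Rightarrow> 'a multiset \<Rightarrow> 'a multiset" where
  "msym_diff M1 M2 = (M1 - M2) + (M2 - M1)"

definition d_mu :: "nat \<Rightarrow> 'v network \<Rightarrow> 'w network \<Rightarrow> real" where
  "d_mu n N1 N2 = real (size (msym_diff (mu_rep n N1) (mu_rep n N2))) / 2"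

datatype nested = NLeaf nat | NNode "nested multiset"

text \<open>Nested label computed with a fuel parameter k; for k at least the height of v
  (in particular for k = card of the node set) this is the inductive definition on height.\<close>
fun nlabel_fuel :: "nat \<Rightarrow> 'v network \<Rightarrow> nat \<Rightarrow> 'v \<Rightarrow> nested" where
  "nlabel_fuel n N 0 v =
     (if \<exists>i\<in>{1..n}. leaf N i = v then NLeaf (SOME i. i \<in> {1..n} \<and> leaf N i = v)
      else NNode {#})"
| "nlabel_fuel n N (Suc k) v =
     (if \<exists>i\<in>{1..n}. leaf N i = v then NLeaf (SOME i. i \<in> {1..n} \<and> leaf N i = v)
      else NNode (image_mset (nlabel_fuel n N k) (mset_set (children N v))))"

definition nlabel :: "nat \<Rightarrow> 'v network \<Rightarrow> 'v \<Rightarrow> nested" where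
  "nlabel n N v = nlabel_fuel n N (card (nodes N)) v"

definition Upsilon :: "nat \<Rightarrow> 'v network \<Rightarrow> nested multiset" where
  "Upsilon n N = image_mset (nlabel n N) (mset_set (nodes N))"

definition m_dist :: "nat \<Rightarrow> 'v network \<Rightarrow> 'w network \<Rightarrow> real" where
  "m_dist n N1 N2 = real (size (msym_diff (Upsilon n N1) (Upsilon n N2))) / 2"

end

theory Submission
  imports Defs
begin

primrec G :: "nested \<Rightarrow> nat \<Rightarrow> nat" where
  "G (NLeaf j) = (\<lambda>i. if i = j then 1 else 0)"
| "G (NNode M) = (\<lambda>i. sum_mset (image_mset (\<lambda>f. f i) (image_mset G M)))"

lemma dpath_trancl:
  assumes "is_dpath N p" "a < b" "b < length p"
  shows "(p ! a, p ! b) \<in> (arcs N)\<^sup>+"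
  using assms(2,3)
proof (induction b)
  case 0 then show ?case by simp
next
  case (Suc b)
  have arc: "(p ! b, p ! Suc b) \<in> arcs N" using assms(1) Suc.prems unfolding is_dpath_def by blast
  show ?case
  proof (cases "a = b")
    case True then show ?thesis using arc by auto
  next
    case False
    then have "(p ! a, p ! b) \<in> (arcs N)\<^sup>+" using Suc by auto
    then show ?thesis using arc by (meson trancl.trancl_into_trancl)
  qed
qed

lemma dpath_distinct:
  assumes "acyclic (arcs N)" "is_dpath N p"
  shows "distinct p"
proof -
  { fix a b assume ab: "a < b" "b < length p" "p ! a = p ! b"
    then have "(p ! a, p ! a) \<in> (arcs N)\<^sup>+" using dpath_trancl[OF assms(2) ab(1,2)] by simp
    then have False using assms(1) unfolding acyclic_def by blast }
  then show ?thesis unfolding distinct_conv_nth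
    by (metis antisym_conv3 order.strict_trans)
qed

lemma dpath_set:
  assumes "arcs N \<subseteq> nodes N \<times> nodes N" "is_dpath N p" "hd p \<in> nodes N"
  shows "set p \<subseteq> nodes N"
proof
  fix x assume "x \<in> set p"
  then obtain k where k: "k < length p" "p ! k = x" by (metis in_set_conv_nth)
  show "x \<in> nodes N"
  proof (cases k)
    case 0 then show ?thesis using k assms(2,3) unfolding is_dpath_def by (simp add: hd_conv_nth)
  next
    case (Suc j)
    then have "(p ! j, p ! k) \<in> arcs N" using assms(2) k unfolding is_dpath_def by auto
    then show ?thesis using assms(1) k by auto
  qed
qed

lemma dpath_len:
  assumes "phylo_net n N" "is_dpath N p" "hd p \<in> nodes N"
  shows "length p \<le> card (nodes N)"
proof -
  have "distinct p" using dpath_distinct assms unfolding phylo_net_def by blast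
  moreover have "set p \<subseteq> nodes N" using dpath_set assms unfolding phylo_net_def by blast
  ultimately show ?thesis using assms(1) unfolding phylo_net_def
    by (metis card_mono distinct_card)
qed

lemma paths_finite:
  assumes "phylo_net n N" "v \<in> nodes N"
  shows "finite {p. is_dpath N p \<and> hd p = v \<and> last p = w}"
proof (rule finite_subset)
  show "{p. is_dpath N p \<and> hd p = v \<and> last p = w} \<subseteq> {xs. set xs \<subseteq> nodes N \<and> distinct xs}"
    using dpath_set dpath_distinct assms unfolding phylo_net_def by blast
  show "finite {xs. set xs \<subseteq> nodes N \<and> distinct xs}"
    using assms finite_subset_distinct unfolding phylo_net_def by blast
qed

lemma paths_decomp:
  assumes "v \<noteq> w"
  shows "{p. is_dpath N p \<and> hd p = v \<and> last p = w}
       = (\<Union>c\<in>children N v. (Cons v) ` {p. is_dpath N p \<and> hd p = c \<and> last p = w})"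
proof (intro equalityI subsetI)
  fix p assume "p \<in> {p. is_dpath N p \<and> hd p = v \<and> last p = w}"
  then have p: "is_dpath N p" "hd p = v" "last p = w" by auto
  then obtain q where q: "p = v # q" unfolding is_dpath_def by (cases p) auto
  then have "q \<noteq> []" using p assms by auto
  then obtain c q' where cq: "q = c # q'" by (cases q) auto
  have "(p ! 0, p ! 1) \<in> arcs N" using p(1) q cq unfolding is_dpath_def by auto
  then have "c \<in> children N v" using q cq unfolding children_def by auto
  moreover have "is_dpath N q"
  proof -
    have h: "\<forall>k. Suc k < length (v # q) \<longrightarrow> ((v # q) ! k, (v # q) ! Suc k) \<in> arcs N"
      using p(1) q unfolding is_dpath_def by simp
    { fix k assume "Suc k < length q"
      then have "Suc (Suc k) < length (v # q)" by simp
      then have "((v # q) ! Suc k, (v # q) ! Suc (Suc k)) \<in> arcs N" using h by blast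
      then have "(q ! k, q ! Suc k) \<in> arcs N" by simp }
    then show ?thesis using cq unfolding is_dpath_def by auto
  qed
  moreover have "last q = w" using p q cq by auto
  ultimately show "p \<in> (\<Union>c\<in>children N v. (Cons v) ` {p. is_dpath N p \<and> hd p = c \<and> last p = w})"
    using q cq by (intro UN_I[of c]) (auto intro!: image_eqI[of _ _ "c # q'"])
next
  fix p assume "p \<in> (\<Union>c\<in>children N v. (Cons v) ` {p. is_dpath N p \<and> hd p = c \<and> last p = w})"
  then obtain c q where c: "c \<in> children N v" "p = v # q" "is_dpath N q" "hd q = c" "last q = w" by auto
  have qne: "q \<noteq> []" using c unfolding is_dpath_def by auto
  have "is_dpath N p" unfolding is_dpath_def
  proof (intro conjI allI impI)
    show "p \<noteq> []" using c by simp
    fix k assume k: "Suc k < length p"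
    show "(p ! k, p ! Suc k) \<in> arcs N"
    proof (cases k)
      case 0 then show ?thesis using c qne unfolding children_def by (cases q) auto
    next
      case (Suc j) then show ?thesis using c k unfolding is_dpath_def by auto
    qed
  qed
  then show "p \<in> {p. is_dpath N p \<and> hd p = v \<and> last p = w}" using c qne by auto
qed

lemma num_paths_internal:
  assumes "phylo_net n N" "v \<in> nodes N" "v \<noteq> w"
  shows "num_paths N v w = (\<Sum>c\<in>children N v. num_paths N c w)"
proof -
  have fin: "finite (nodes N)" and sub: "arcs N \<subseteq> nodes N \<times> nodes N" using assms(1) unfolding phylo_net_def by auto
  have ch: "children N v \<subseteq> nodes N" using sub unfolding children_def by auto
  then have fc: "finite (children N v)" using fin finite_subset by blast
  have "num_paths N v w = card (\<Union>c\<in>children N v. (Cons v) ` {p. is_dpath N p \<and> hd p = c \<and> last p = w})"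
    unfolding num_paths_def using paths_decomp[OF assms(3)] by simp
  also have "\<dots> = (\<Sum>c\<in>children N v. card ((Cons v) ` {p. is_dpath N p \<and> hd p = c \<and> last p = w}))"
  proof (rule card_UN_disjoint[OF fc])
    show "\<forall>c\<in>children N v. finite ((Cons v) ` {p. is_dpath N p \<and> hd p = c \<and> last p = w})"
      using paths_finite[OF assms(1)] ch by blast
    show "\<forall>i\<in>children N v. \<forall>j\<in>children N v. i \<noteq> j \<longrightarrow>
      (Cons v) ` {p. is_dpath N p \<and> hd p = i \<and> last p = w} \<inter> (Cons v) ` {p. is_dpath N p \<and> hd p = j \<and> last p = w} = {}"
      by auto
  qed
  also have "\<dots> = (\<Sum>c\<in>children N v. num_paths N c w)"
    unfolding num_paths_def by (intro sum.cong refl card_image) auto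
  finally show ?thesis .
qed

lemma leaf_facts:
  assumes "phylo_net n N"
  shows "inj_on (leaf N) {1..n}" "\<And>i. i \<in> {1..n} \<Longrightarrow> children N (leaf N i) = {}"
    "\<And>i. i \<in> {1..n} \<Longrightarrow> leaf N i \<in> nodes N"
    "\<And>v. v \<in> nodes N \<Longrightarrow> v \<notin> leaf N ` {1..n} \<Longrightarrow> children N v \<noteq> {}"
proof -
  have b: "bij_betw (leaf N) {1..n} {v. is_leaf_node N v}" using assms unfolding phylo_net_def by blast
  then show "inj_on (leaf N) {1..n}" by (rule bij_betw_imp_inj_on)
  have im: "leaf N ` {1..n} = {v. is_leaf_node N v}" using b by (rule bij_betw_imp_surj_on)
  fix i assume "i \<in> {1..n}"
  then have "is_leaf_node N (leaf N i)" using im by blast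
  then show "children N (leaf N i) = {}" "leaf N i \<in> nodes N" unfolding is_leaf_node_def by auto
next
  have b: "bij_betw (leaf N) {1..n} {v. is_leaf_node N v}" using assms unfolding phylo_net_def by blast
  have im: "leaf N ` {1..n} = {v. is_leaf_node N v}" using b by (rule bij_betw_imp_surj_on)
  fix v assume "v \<in> nodes N" "v \<notin> leaf N ` {1..n}"
  then show "children N v \<noteq> {}" using im unfolding is_leaf_node_def by blast
qed

lemma leaf_paths:
  assumes "phylo_net n N" "j \<in> {1..n}" "i \<in> {1..n}"
  shows "num_paths N (leaf N j) (leaf N i) = (if i = j then 1 else 0)"
proof -
  have nc: "children N (leaf N j) = {}" using leaf_facts(2)[OF assms(1,2)] .
  have one: "p = [leaf N j]" if p: "is_dpath N p" "hd p = leaf N j" for p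
  proof -
    obtain x q where q: "p = x # q" using p(1) unfolding is_dpath_def by (cases p) auto
    have x: "x = leaf N j" using q p(2) by simp
    show ?thesis
    proof (cases q)
      case Nil then show ?thesis using q x by simp
    next
      case (Cons y r)
      have "Suc 0 < length p" using q Cons by simp
      then have "(p ! 0, p ! Suc 0) \<in> arcs N" using p(1) unfolding is_dpath_def by blast
      then have "(leaf N j, y) \<in> arcs N" using q Cons x by simp
      then show ?thesis using nc unfolding children_def by blast
    qed
  qed
  have dp: "is_dpath N [leaf N j]" unfolding is_dpath_def by simp
  have inj: "leaf N j = leaf N i \<longleftrightarrow> i = j"
    using inj_onD[OF leaf_facts(1)[OF assms(1)] _ assms(2,3)] by blast
  show ?thesis
  proof (cases "i = j")
    case True
    then have "{p. is_dpath N p \<and> hd p = leaf N j \<and> last p = leaf N i} = {[leaf N j]}"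
    proof (intro equalityI subsetI)
      fix p assume "p \<in> {p. is_dpath N p \<and> hd p = leaf N j \<and> last p = leaf N i}"
      then show "p \<in> {[leaf N j]}" using one by blast
    next
      fix p assume "p \<in> {[leaf N j]}"
      then show "p \<in> {p. is_dpath N p \<and> hd p = leaf N j \<and> last p = leaf N i}" using dp True by simp
    qed
    then show ?thesis unfolding num_paths_def using True by simp
  next
    case False
    then have "{p. is_dpath N p \<and> hd p = leaf N j \<and> last p = leaf N i} = {}"
    proof (intro equalityI subsetI)
      fix p assume "p \<in> {p. is_dpath N p \<and> hd p = leaf N j \<and> last p = leaf N i}"
      then have "p = [leaf N j]" "last p = leaf N i" using one by blast+
      then have "leaf N j = leaf N i" by simp
      then show "p \<in> {}" using inj False by blast
    qed simp
    then show ?thesis unfolding num_paths_def using False by (simp only: card.empty if_False)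
  qed
qed

lemma leaf_label:
  assumes "phylo_net n N" "j \<in> {1..n}"
  shows "nlabel_fuel n N k (leaf N j) = NLeaf j"
proof -
  have ex: "\<exists>i\<in>{1..n}. leaf N i = leaf N j" using assms(2) by blast
  have some: "(SOME i. i \<in> {1..n} \<and> leaf N i = leaf N j) = j"
  proof (rule some_equality)
    show "j \<in> {1..n} \<and> leaf N j = leaf N j" using assms(2) by simp
    fix i assume "i \<in> {1..n} \<and> leaf N i = leaf N j"
    then show "i = j" using inj_onD[OF leaf_facts(1)[OF assms(1)] _ _ assms(2)] by blast
  qed
  show ?thesis by (cases k) (simp_all only: nlabel_fuel.simps ex some if_True)
qed

lemma key:
  assumes "phylo_net n N" "i \<in> {1..n}"
  shows "v \<in> nodes N \<Longrightarrow> (\<forall>p. is_dpath N p \<and> hd p = v \<longrightarrow> length p \<le> Suc k)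
     \<Longrightarrow> num_paths N v (leaf N i) = G (nlabel_fuel n N k v) i"
proof (induction k arbitrary: v)
  case 0
  show ?case
  proof (cases "\<exists>j\<in>{1..n}. leaf N j = v")
    case True
    then obtain j where j: "j \<in> {1..n}" "leaf N j = v" by blast
    have "num_paths N v (leaf N i) = (if i = j then 1 else 0)"
      using leaf_paths[OF assms(1) j(1) assms(2)] j(2) by simp
    moreover have "nlabel_fuel n N 0 v = NLeaf j" using leaf_label[OF assms(1) j(1), of "0"] unfolding j(2) .
    ultimately show ?thesis by simp
  next
    case False
    then obtain c where c: "c \<in> children N v" using leaf_facts(4)[OF assms(1) 0(1)] by blast
    have dp: "is_dpath N [v, c]" unfolding is_dpath_def
    proof (intro conjI allI impI)
      show "[v, c] \<noteq> []" by simp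
      fix m assume "Suc m < length [v, c]"
      then have "m = 0" by simp
      then show "([v, c] ! m, [v, c] ! Suc m) \<in> arcs N" using c unfolding children_def by simp
    qed
    have "length [v, c] \<le> Suc 0" using 0(2) dp by (metis list.sel(1))
    then show ?thesis by simp
  qed
next
  case (Suc k)
  show ?case
  proof (cases "\<exists>j\<in>{1..n}. leaf N j = v")
    case True
    then obtain j where j: "j \<in> {1..n}" "leaf N j = v" by blast
    have "num_paths N v (leaf N i) = (if i = j then 1 else 0)"
      using leaf_paths[OF assms(1) j(1) assms(2)] j(2) by simp
    moreover have "nlabel_fuel n N (Suc k) v = NLeaf j" using leaf_label[OF assms(1) j(1), of "(Suc k)"] unfolding j(2) .
    ultimately show ?thesis by simp
  next
    case False
    have sub: "arcs N \<subseteq> nodes N \<times> nodes N" using assms(1) unfolding phylo_net_def by auto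
    have ne: "v \<noteq> leaf N i" using False assms(2) by auto
    have IH: "num_paths N c (leaf N i) = G (nlabel_fuel n N k c) i" if c: "c \<in> children N v" for c
    proof (rule Suc.IH)
      show "c \<in> nodes N" using c sub unfolding children_def by auto
      show "\<forall>p. is_dpath N p \<and> hd p = c \<longrightarrow> length p \<le> Suc k"
      proof (intro allI impI)
        fix p assume p: "is_dpath N p \<and> hd p = c"
        have "is_dpath N (v # p)" unfolding is_dpath_def
        proof (intro conjI allI impI)
          show "v # p \<noteq> []" by simp
          fix m assume m: "Suc m < length (v # p)"
          show "((v # p) ! m, (v # p) ! Suc m) \<in> arcs N"
          proof (cases m)
            case 0
            have "p \<noteq> []" using p unfolding is_dpath_def by blast
            then have "p ! 0 = c" using p by (simp add: hd_conv_nth)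
            then show ?thesis using c 0 unfolding children_def by simp
          next
            case (Suc j)
            then have "Suc j < length p" using m by simp
            then have "(p ! j, p ! Suc j) \<in> arcs N" using p unfolding is_dpath_def by blast
            then show ?thesis using Suc by simp
          qed
        qed
        then have "length (v # p) \<le> Suc (Suc k)" using Suc.prems(2) by (metis list.sel(1))
        then show "length p \<le> Suc k" by simp
      qed
    qed
    have "num_paths N v (leaf N i) = (\<Sum>c\<in>children N v. num_paths N c (leaf N i))"
      using num_paths_internal[OF assms(1) Suc.prems(1) ne] .
    also have "\<dots> = (\<Sum>c\<in>children N v. G (nlabel_fuel n N k c) i)"
      using IH by (rule sum.cong[OF refl])
    also have "\<dots> = sum_mset (image_mset (\<lambda>c. G (nlabel_fuel n N k c) i) (mset_set (children N v)))"
      by (rule sum_unfold_sum_mset)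
    also have "\<dots> = G (nlabel_fuel n N (Suc k) v) i"
      using False by (simp add: multiset.map_comp o_def)
    finally show ?thesis .
  qed
qed

lemma nlabel_mu:
  assumes "phylo_net n N" "v \<in> nodes N"
  shows "mu_vec n N v = map (G (nlabel n N v)) [1..<Suc n]"
  unfolding mu_vec_def nlabel_def
proof (rule map_cong[OF refl])
  fix i assume "i \<in> set [1..<Suc n]"
  then have i: "i \<in> {1..n}" by auto
  show "num_paths N v (leaf N i) = G (nlabel_fuel n N (card (nodes N)) v) i"
  proof (rule key[OF assms(1) i assms(2)], intro allI impI)
    fix p assume "is_dpath N p \<and> hd p = v"
    then have "length p \<le> card (nodes N)" using dpath_len[OF assms(1), of p] assms(2) by simp
    then show "length p \<le> Suc (card (nodes N))" by simp
  qed
qed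

lemma mu_rep_Upsilon:
  assumes "phylo_net n N"
  shows "mu_rep n N = image_mset (\<lambda>x. map (G x) [1..<Suc n]) (Upsilon n N)"
  unfolding mu_rep_def Upsilon_def multiset.map_comp o_def
proof (rule image_mset_cong)
  fix v assume "v \<in># mset_set (nodes N)"
  then have "v \<in> nodes N" by (cases "finite (nodes N)") auto
  then show "mu_vec n N v = map (G (nlabel n N v)) [1..<Suc n]" by (rule nlabel_mu[OF assms])
qed

lemma msym_zero: "size (msym_diff A B) = 0 \<longleftrightarrow> A = B"
proof
  assume "size (msym_diff A B) = 0"
  then have "A - B = {#}" "B - A = {#}" unfolding msym_diff_def by auto
  then have "A \<subseteq># B" "B \<subseteq># A" by (simp_all add: Diff_eq_empty_iff_mset)
  then show "A = B" by (rule subset_mset.antisym)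
qed (simp add: msym_diff_def)

theorem corollary2:
  fixes n :: nat and NN :: "'v network set"
  assumes "\<forall>N\<in>NN. phylo_net n N"
    and "\<forall>N1\<in>NN. \<forall>N2\<in>NN. d_mu n N1 N2 = 0 \<longrightarrow> net_iso n N1 N2"
  shows "\<forall>N1\<in>NN. \<forall>N2\<in>NN. m_dist n N1 N2 = 0 \<longrightarrow> net_iso n N1 N2"
proof (intro ballI impI)
  fix N1 N2 assume N: "N1 \<in> NN" "N2 \<in> NN" and m: "m_dist n N1 N2 = 0"
  then have "size (msym_diff (Upsilon n N1) (Upsilon n N2)) = 0" unfolding m_dist_def by simp
  then have U: "Upsilon n N1 = Upsilon n N2" by (rule msym_zero[THEN iffD1])
  have "mu_rep n N1 = mu_rep n N2"
    using mu_rep_Upsilon[of n N1] mu_rep_Upsilon[of n N2] assms(1) N U by simp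
  then have "d_mu n N1 N2 = 0" unfolding d_mu_def msym_diff_def by simp
  then show "net_iso n N1 N2" using assms(2) N by blast
qed

end
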